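(* For every prime $p\geq 11$, $$P(p,3)\leq (p-1)!-\left\lceil \tfrac{p}{3}\right\rceil+2\leq (p-1)!-2 .$$
   Context: $S_n$ denotes the set (group) of all permutations of $[n]=\{1,\dots,n\}$, with product $\lambda\cdot\sigma$ defined by $(\lambda\cdot\sigma)(i)=\sigma(\lambda(i))$. An adjacent transposition is a transposition $(i,i+1)$ with $1\leq i\leq n-1$. The Kendall $\tau$-distance $d_K(\rho,\pi)$ between $\rho,\pi\in S_n$ is the minimum number of adjacent transpositions whose product equals $\rho\pi^{-1}$ (equivalently, the graph distance in the Cayley graph of $S_n$ with respect to the set of adjacent transpositions). A permutation code of length $n$ is a non-empty subset of $S_n$; $P(n,d)$ denotes the maximum size of a permutation code $C\subseteq S_n$ such that $d_K(x,y)\geq d$ for all distinct $x,y\in C$. *)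

theory Defs
  imports "HOL-Combinatorics.Combinatorics" "HOL-Computational_Algebra.Primes"
begin

text \<open>Permutations of [n] = {1..n} are functions nat => nat with p permutes {1..n}.
  Product convention of the paper: (lambda . sigma)(i) = sigma(lambda(i)), i.e.
  lambda . sigma = sigma o lambda.\<close>

definition perm_mult :: "(nat \<Rightarrow> nat) \<Rightarrow> (nat \<Rightarrow> nat) \<Rightarrow> (nat \<Rightarrow> nat)" where
  "perm_mult l s = s \<circ> l"

definition adj_transp :: "nat \<Rightarrow> (nat \<Rightarrow> nat)" where
  "adj_transp i = Transposition.transpose i (Suc i)"

definition adj_prod :: "nat list \<Rightarrow> (nat \<Rightarrow> nat)" where
  "adj_prod is = foldl (\<lambda>acc i. perm_mult acc (adj_transp i)) id is"

definition kendall_dist :: "nat \<Rightarrow> (nat \<Rightarrow> nat) \<Rightarrow> (nat \<Rightarrow> nat) \<Rightarrow> nat" where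
  "kendall_dist n rho sig = (LEAST k. \<exists>is. length is = k \<and> set is \<subseteq> {1..<n} \<and>
      adj_prod is = perm_mult rho (inv sig))"

definition Sn :: "nat \<Rightarrow> (nat \<Rightarrow> nat) set" where
  "Sn n = {p. p permutes {1..n}}"

definition perm_code_dist :: "nat \<Rightarrow> nat \<Rightarrow> (nat \<Rightarrow> nat) set \<Rightarrow> bool" where
  "perm_code_dist n d C \<longleftrightarrow> C \<noteq> {} \<and> C \<subseteq> Sn n \<and>
     (\<forall>x\<in>C. \<forall>y\<in>C. x \<noteq> y \<longrightarrow> kendall_dist n x y \<ge> d)"

definition P_code :: "nat \<Rightarrow> nat \<Rightarrow> nat" where
  "P_code n d = Max (card ` {C. perm_code_dist n d C})"

end

theory Submission
  imports Defs "HOL-Number_Theory.Number_Theory" begin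

definition gm :: "nat \<Rightarrow> nat \<Rightarrow> nat" where
  "gm i k = (if i = 0 then k else Transposition.transpose i (Suc i) k)"

lemma sum_interior:
  fixes w :: "nat \<Rightarrow> int"
  assumes "1 < k" "k < n"
  shows "(\<Sum>i<n. w (gm i k)) = (int n - 2) * w k + w (k - 1) + w (k + 1)"
proof -
  have f1: "k \<in> {..<n}" "k - 1 \<in> {..<n} - {k}" using assms by auto
  have "(\<Sum>i<n. w (gm i k)) = w (gm k k) + (\<Sum>i\<in>{..<n} - {k}. w (gm i k))"
    using f1 by (simp add: sum.remove)
  also have "(\<Sum>i\<in>{..<n} - {k}. w (gm i k)) = w (gm (k-1) k) + (\<Sum>i\<in>{..<n} - {k} - {k-1}. w (gm i k))"
    using f1 by (simp add: sum.remove)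
  also have "(\<Sum>i\<in>{..<n} - {k} - {k-1}. w (gm i k)) = (\<Sum>i\<in>{..<n} - {k} - {k-1}. w k)"
    by (rule sum.cong) (auto simp: gm_def Transposition.transpose_def)
  also have "\<dots> = int (n - 2) * w k" using f1 assms by simp
  finally show ?thesis using assms by (simp add: gm_def Transposition.transpose_def of_nat_diff)
qed

lemma sum_first:
  fixes w :: "nat \<Rightarrow> int"
  assumes "1 < n"
  shows "(\<Sum>i<n. w (gm i 1)) = (int n - 1) * w 1 + w 2"
proof -
  have f1: "1 \<in> {..<n}" using assms by auto
  have "(\<Sum>i<n. w (gm i 1)) = w (gm 1 1) + (\<Sum>i\<in>{..<n} - {1}. w (gm i 1))"
    using f1 by (simp add: sum.remove)
  also have "(\<Sum>i\<in>{..<n} - {1}. w (gm i 1)) = (\<Sum>i\<in>{..<n} - {1}. w 1)"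
    by (rule sum.cong) (auto simp: gm_def Transposition.transpose_def)
  also have "\<dots> = int (n - 1) * w 1" using f1 assms by simp
  finally show ?thesis using assms by (simp add: gm_def Transposition.transpose_def of_nat_diff numeral_2_eq_2)
qed

lemma sum_last:
  fixes w :: "nat \<Rightarrow> int"
  assumes "1 < n"
  shows "(\<Sum>i<n. w (gm i n)) = (int n - 1) * w n + w (n - 1)"
proof -
  have f1: "n - 1 \<in> {..<n}" using assms by auto
  have "(\<Sum>i<n. w (gm i n)) = w (gm (n-1) n) + (\<Sum>i\<in>{..<n} - {n-1}. w (gm i n))"
    using f1 by (simp add: sum.remove)
  also have "(\<Sum>i\<in>{..<n} - {n-1}. w (gm i n)) = (\<Sum>i\<in>{..<n} - {n-1}. w n)"
    by (rule sum.cong) (auto simp: gm_def Transposition.transpose_def)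
  also have "\<dots> = int (n - 1) * w n" using f1 assms by simp
  finally show ?thesis using assms by (simp add: gm_def Transposition.transpose_def of_nat_diff)
qed

lemma shift_down:
  fixes Q :: "nat \<Rightarrow> int"
  shows "(\<Sum>k=1..n. Q (k - 1)) + Q n = (\<Sum>k=1..n. Q k) + Q 0"
  by (induction n) auto

lemma shift_up:
  fixes Q :: "nat \<Rightarrow> int"
  shows "(\<Sum>k=1..n. Q (k + 1)) + Q 1 = (\<Sum>k=1..n. Q k) + Q (n + 1)"
  by (induction n) auto

lemma local_ineq:
  fixes w :: "nat \<Rightarrow> int" and n :: nat
  defines "W \<equiv> (\<lambda>j. if 1 \<le> j \<and> j \<le> n then w j else 0)"
  assumes n5: "n \<ge> 5" and k: "k \<in> {1..n}" and h: "(\<Sum>i<n. w (gm i k)) \<ge> 1"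
  shows "max (W (k-1)) 0 + max (W k) 0 + max (W (k+1)) 0 \<ge> 1 + (int n - 2) * max (- W k) 0"
proof -
  consider "k = 1" | "k = n" | "1 < k \<and> k < n" using k n5 by fastforce
  then show ?thesis
  proof cases
    case 1
    then have e: "(int n - 1) * w 1 + w 2 \<ge> 1" using h sum_first[of n w] n5 by simp
    have W: "W 0 = 0" "W 1 = w 1" "W 2 = w 2" using n5 by (auto simp: W_def)
    show ?thesis
    proof (cases "w 1 \<ge> 1")
      case True then show ?thesis using 1 W by simp
    next
      case False
      then have a: "(int n - 1) * w 1 \<le> (int n - 2) * w 1" by (simp add: mult_right_mono_neg)
      have b: "max (- w 1) 0 = - w 1" "max (w 1) 0 = 0" "(int n - 2) * (- w 1) = - ((int n - 2) * w 1)"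
        "w 2 \<le> max (w 2) 0" using False by auto
      show ?thesis using 1 W e a b by (simp add: numeral_2_eq_2)
    qed
  next
    case 2
    then have e: "(int n - 1) * w n + w (n-1) \<ge> 1" using h sum_last[of n w] n5 by simp
    have W: "W (n+1) = 0" "W n = w n" "W (n-1) = w (n-1)" using n5 by (auto simp: W_def)
    show ?thesis
    proof (cases "w n \<ge> 1")
      case True then show ?thesis using 2 W by simp
    next
      case False
      then have a: "(int n - 1) * w n \<le> (int n - 2) * w n" by (simp add: mult_right_mono_neg)
      have b: "max (- w n) 0 = - w n" "max (w n) 0 = 0" "(int n - 2) * (- w n) = - ((int n - 2) * w n)"
        "w (n-1) \<le> max (w (n-1)) 0" using False by auto
      show ?thesis using 2 W e a b by simp
    qed
  next
    case 3
    then have e: "(int n - 2) * w k + w (k - 1) + w (k + 1) \<ge> 1" using h sum_interior[of k n w] by simp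
    have W: "W (k+1) = w (k+1)" "W k = w k" "W (k-1) = w (k-1)" using 3 by (auto simp: W_def)
    show ?thesis
    proof (cases "w k \<ge> 1")
      case True then show ?thesis using W by simp
    next
      case False
      have b: "max (- w k) 0 = - w k" "max (w k) 0 = 0" "(int n - 2) * (- w k) = - ((int n - 2) * w k)"
        "w (k-1) \<le> max (w (k-1)) 0" "w (k+1) \<le> max (w (k+1)) 0" using False by auto
      show ?thesis using W e b by simp
    qed
  qed
qed

lemma key_sum:
  fixes w :: "nat \<Rightarrow> int" and n :: nat
  assumes n5: "n \<ge> 5" and h: "\<And>k. k \<in> {1..n} \<Longrightarrow> (\<Sum>i<n. w (gm i k)) \<ge> 1"
  shows "int n \<le> 3 * (\<Sum>k=1..n. w k)"
proof -
  define W where "W = (\<lambda>j. if 1 \<le> j \<and> j \<le> n then w j else 0)"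
  define Q where "Q = (\<lambda>j. max (W j) 0)"
  define R where "R = (\<lambda>j. max (- W j) 0)"
  have loc: "Q (k-1) + Q k + Q (k+1) \<ge> 1 + (int n - 2) * R k" if "k \<in> {1..n}" for k
    using local_ineq[OF n5 that h[OF that]] unfolding Q_def R_def W_def by simp
  have "(\<Sum>k=1..n. 1 + (int n - 2) * R k) \<le> (\<Sum>k=1..n. Q (k-1) + Q k + Q (k+1))"
    by (rule sum_mono) (use loc in auto)
  also have "\<dots> = (\<Sum>k=1..n. Q (k-1)) + (\<Sum>k=1..n. Q k) + (\<Sum>k=1..n. Q (k+1))"
    by (simp add: sum.distrib)
  also have "\<dots> \<le> 3 * (\<Sum>k=1..n. Q k)"
  proof -
    have "Q 0 = 0" "Q (n+1) = 0" "Q n \<ge> 0" "Q 1 \<ge> 0" by (auto simp: Q_def W_def)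
    then show ?thesis using shift_down[of Q n] shift_up[of Q n] by linarith
  qed
  finally have A: "int n + (int n - 2) * (\<Sum>k=1..n. R k) \<le> 3 * (\<Sum>k=1..n. Q k)"
    by (simp add: sum.distrib sum_distrib_left)
  have Rn: "(\<Sum>k=1..n. R k) \<ge> 0" by (rule sum_nonneg) (auto simp: R_def)
  have "3 * (\<Sum>k=1..n. R k) \<le> (int n - 2) * (\<Sum>k=1..n. R k)"
    using Rn n5 by (intro mult_right_mono) auto
  moreover have "(\<Sum>k=1..n. w k) = (\<Sum>k=1..n. Q k) - (\<Sum>k=1..n. R k)"
    unfolding sum_subtractf[symmetric] by (rule sum.cong) (auto simp: Q_def R_def W_def max_def)
  ultimately show ?thesis using A Rn by linarith
qed

definition ta :: "nat \<Rightarrow> nat \<Rightarrow> nat" where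
  "ta i = (if i = 0 then id else Transposition.transpose i (Suc i))"

lemma ta_apply: "ta i k = gm i k" by (simp add: ta_def gm_def)

lemma ta_invol: "ta i \<circ> ta i = id" by (simp add: ta_def)

lemma ta_inj: "ta i = ta j \<Longrightarrow> i = j"
proof -
  assume h: "ta i = ta j"
  have "ta i i = ta j i" "ta i j = ta j j" using h by auto
  then show "i = j" by (auto simp: ta_def Transposition.transpose_def split: if_splits)
qed

lemma ta_permutes: "i < n \<Longrightarrow> ta i permutes {1..n}"
  by (auto simp: ta_def permutes_id intro!: permutes_swap_id)

lemma adj_prod_ta: "i < n \<Longrightarrow> j < n \<Longrightarrow>
  \<exists>L. length L \<le> 2 \<and> set L \<subseteq> {1..<n} \<and> adj_prod L = ta j \<circ> ta i"
proof -
  assume "i < n" "j < n"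
  define L where "L = (if i = 0 then [] else [i]) @ (if j = 0 then [] else [j])"
  have "adj_prod L = ta j \<circ> ta i"
    by (auto simp: L_def adj_prod_def perm_mult_def adj_transp_def ta_def)
  moreover have "length L \<le> 2" "set L \<subseteq> {1..<n}" using \<open>i < n\<close> \<open>j < n\<close> by (auto simp: L_def)
  ultimately show ?thesis by blast
qed

lemma close_dist:
  assumes "\<sigma> \<in> Sn n" "\<tau> \<in> Sn n" "i < n" "j < n" "\<sigma> \<circ> ta i = \<tau> \<circ> ta j"
  shows "kendall_dist n \<sigma> \<tau> \<le> 2"
proof -
  have tp: "\<tau> permutes {1..n}" using assms(2) by (simp add: Sn_def)
  have "\<sigma> = \<sigma> \<circ> (ta i \<circ> ta i)" by (simp add: ta_invol)
  also have "\<dots> = \<tau> \<circ> ta j \<circ> ta i" using assms(5) by (metis comp_assoc)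
  finally have "Hilbert_Choice.inv \<tau> \<circ> \<sigma> = (Hilbert_Choice.inv \<tau> \<circ> \<tau>) \<circ> ta j \<circ> ta i" by (simp add: comp_assoc)
  also have "\<dots> = ta j \<circ> ta i" using permutes_inv_o(2)[OF tp] by simp
  finally have e: "perm_mult \<sigma> (Hilbert_Choice.inv \<tau>) = ta j \<circ> ta i" by (simp add: perm_mult_def)
  obtain L where L: "length L \<le> 2" "set L \<subseteq> {1..<n}" "adj_prod L = ta j \<circ> ta i"
    using adj_prod_ta[OF assms(3,4)] by blast
  have "kendall_dist n \<sigma> \<tau> \<le> length L"
    unfolding kendall_dist_def by (rule Least_le) (use L e in auto)
  then show ?thesis using L by simp
qed

lemma card_T:
  assumes "k \<in> {1..n}"
  shows "card {\<pi>. \<pi> permutes {1..n} \<and> \<pi> k = n} \<le> fact (n - 1)"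
proof -
  define \<tau> where "\<tau> = Transposition.transpose k n"
  have tp: "\<tau> permutes {1..n}" unfolding \<tau>_def using assms by (auto intro!: permutes_swap_id)
  have fin: "finite {p. p permutes {1..n - 1}}" by (rule finite_permutations) simp
  have inj: "inj_on (\<lambda>\<rho>. \<rho> \<circ> \<tau>) {\<pi>. \<pi> permutes {1..n} \<and> \<pi> k = (n::nat)}"
  proof (rule inj_onI)
    fix x y :: "nat \<Rightarrow> nat" assume "x \<circ> \<tau> = y \<circ> \<tau>"
    then have "x \<circ> \<tau> \<circ> \<tau> = y \<circ> \<tau> \<circ> \<tau>" by simp
    then show "x = y" by (simp add: comp_assoc \<tau>_def)
  qed
  have sub: "(\<lambda>\<rho>. \<rho> \<circ> \<tau>) ` {\<pi>. \<pi> permutes {1..n} \<and> \<pi> k = n} \<subseteq> {p. p permutes {1..n - 1}}"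
  proof
    fix x assume "x \<in> (\<lambda>\<rho>. \<rho> \<circ> \<tau>) ` {\<pi>. \<pi> permutes {1..n} \<and> \<pi> k = n}"
    then obtain \<rho> where r: "\<rho> permutes {1..n}" "\<rho> k = n" and x: "x = \<rho> \<circ> \<tau>" by blast
    have c: "\<rho> \<circ> \<tau> permutes {1..n}" by (rule permutes_compose[OF tp r(1)])
    have "\<rho> \<circ> \<tau> permutes {1..n - 1}"
    proof (rule permutes_superset[OF c])
      fix x assume "x \<in> {1..n} - {1..n-1}"
      then have "x = n" by auto
      then show "(\<rho> \<circ> \<tau>) x = x" using r by (simp add: \<tau>_def)
    qed
    then show "x \<in> {p. p permutes {1..n - 1}}" using x by simp
  qed
  have "card {\<pi>. \<pi> permutes {1..n} \<and> \<pi> k = n} \<le> card {p. p permutes {1..n - 1}}"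
    by (rule card_inj_on_le[OF inj sub fin])
  also have "\<dots> = fact (n - 1)" by (rule card_permutations) auto
  finally show ?thesis .
qed

lemma code_bound:
  assumes pr: "prime n" and n5: "n \<ge> 5" and code: "perm_code_dist n 3 C"
  shows "int (card C) \<le> int (fact (n - 1)) - \<lceil>real n / 3\<rceil> + 2"
proof -
  have CS: "C \<subseteq> Sn n" and dist: "\<And>x y. x \<in> C \<Longrightarrow> y \<in> C \<Longrightarrow> x \<noteq> y \<Longrightarrow> kendall_dist n x y \<ge> 3"
    using code by (auto simp: perm_code_dist_def)
  have finSn: "finite (Sn n)" unfolding Sn_def by (rule finite_permutations) simp
  have finC: "finite C" using finite_subset[OF CS finSn] .
  have perm: "\<sigma> permutes {1..n}" if "\<sigma> \<in> C" for \<sigma> using CS that by (auto simp: Sn_def)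
  define c where "c j = card {\<sigma>\<in>C. \<sigma> j = n}" for j
  have bound: "(\<Sum>i<n. c (gm i k)) \<le> fact (n - 1)" if k: "k \<in> {1..n}" for k
  proof -
    define D where "D = Sigma {..<n} (\<lambda>i. {\<sigma>\<in>C. \<sigma> (gm i k) = n})"
    define T where "T = {\<pi>. \<pi> permutes {1..n} \<and> \<pi> k = n}"
    have cD: "card D = (\<Sum>i<n. c (gm i k))"
      unfolding D_def c_def by (subst card_SigmaI) (use finC in auto)
    have inj: "inj_on (\<lambda>(i,\<sigma>). \<sigma> \<circ> ta i) D"
    proof (rule inj_onI, clarify)
      fix i \<sigma> j \<tau> assume a: "(i, \<sigma>) \<in> D" "(j, \<tau>) \<in> D" and e: "\<sigma> \<circ> ta i = \<tau> \<circ> ta j"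
      have ai: "i < n" "j < n" "\<sigma> \<in> C" "\<tau> \<in> C" using a by (auto simp: D_def)
      show "i = j \<and> \<sigma> = \<tau>"
      proof (cases "\<sigma> = \<tau>")
        case True
        have "ta i = ta j"
        proof
          fix x
          have "\<sigma> (ta i x) = \<sigma> (ta j x)" using e True by (metis comp_apply)
          then show "ta i x = ta j x" using permutes_inj[OF perm[OF ai(3)]] by (simp add: inj_eq)
        qed
        then show ?thesis using ta_inj True by blast
      next
        case False
        have "kendall_dist n \<sigma> \<tau> \<le> 2" using close_dist[OF _ _ ai(1,2) e] ai CS by auto
        moreover have "kendall_dist n \<sigma> \<tau> \<ge> 3" using dist[OF ai(3,4) False] .
        ultimately show ?thesis by simp
      qed
    qed
    have sub: "(\<lambda>(i,\<sigma>). \<sigma> \<circ> ta i) ` D \<subseteq> T"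
    proof clarify
      fix i \<sigma> assume "(i, \<sigma>) \<in> D"
      then have a: "i < n" "\<sigma> \<in> C" "\<sigma> (gm i k) = n" by (auto simp: D_def)
      have "\<sigma> \<circ> ta i permutes {1..n}" by (rule permutes_compose[OF ta_permutes[OF a(1)] perm[OF a(2)]])
      then show "\<sigma> \<circ> ta i \<in> T" using a by (simp add: T_def ta_apply)
    qed
    have finT: "finite T" unfolding T_def
      by (rule finite_subset[of _ "{p. p permutes {1..n}}"]) (auto intro: finite_permutations)
    have "card D \<le> card T" by (rule card_inj_on_le[OF inj sub finT])
    also have "\<dots> \<le> fact (n - 1)" unfolding T_def by (rule card_T[OF k])
    finally show ?thesis using cD by simp
  qed
  have cardC: "card C = (\<Sum>k=1..n. c k)"
  proof -
    have "C = (\<Union>k\<in>{1..n}. {\<sigma>\<in>C. \<sigma> k = n})"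
    proof (intro equalityI subsetI)
      fix \<sigma> assume s: "\<sigma> \<in> C"
      have p: "\<sigma> permutes {1..n}" using perm[OF s] .
      have "Hilbert_Choice.inv \<sigma> n \<in> {1..n}" using permutes_in_image[OF permutes_inv[OF p]] n5 by simp
      moreover have "\<sigma> (Hilbert_Choice.inv \<sigma> n) = n" using permutes_inverses(1)[OF p] .
      ultimately show "\<sigma> \<in> (\<Union>k\<in>{1..n}. {\<sigma>\<in>C. \<sigma> k = n})" using s by blast
    qed auto
    then have "card C = card (\<Union>k\<in>{1..n}. {\<sigma>\<in>C. \<sigma> k = n})" by simp
    also have "\<dots> = (\<Sum>k=1..n. c k)" unfolding c_def
    proof (rule card_UN_disjoint)
      show "\<forall>i\<in>{1..n}. \<forall>j\<in>{1..n}. i \<noteq> j \<longrightarrow> {\<sigma> \<in> C. \<sigma> i = n} \<inter> {\<sigma> \<in> C. \<sigma> j = n} = {}"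
      proof (intro ballI impI)
        fix i j :: nat assume ij: "i \<noteq> j"
        show "{\<sigma> \<in> C. \<sigma> i = n} \<inter> {\<sigma> \<in> C. \<sigma> j = n} = {}"
        proof (rule ccontr)
          assume "{\<sigma> \<in> C. \<sigma> i = n} \<inter> {\<sigma> \<in> C. \<sigma> j = n} \<noteq> {}"
          then obtain x where "x \<in> {\<sigma> \<in> C. \<sigma> i = n} \<inter> {\<sigma> \<in> C. \<sigma> j = n}" by blast
          then have x: "x \<in> C" "x i = x j" by simp_all
          have "inj x" by (rule permutes_inj[OF perm[OF x(1)]])
          then show False using x(2) ij by (metis injD)
        qed
      qed
    qed (use finC in auto)
    finally show ?thesis .
  qed
  have "int n dvd fact (n - 1) - (-1)"
    using wilson_theorem[OF pr] by (simp add: cong_iff_dvd_diff)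
  then obtain A where A: "fact (n - 1) + 1 = int n * A" by (auto simp: dvd_def)
  define w where "w k = A - int (c k)" for k
  have hw: "(\<Sum>i<n. w (gm i k)) \<ge> 1" if k: "k \<in> {1..n}" for k
  proof -
    have "(\<Sum>i<n. w (gm i k)) = int n * A - int (\<Sum>i<n. c (gm i k))"
      by (simp add: w_def sum_subtractf)
    moreover have "int (\<Sum>i<n. c (gm i k)) \<le> fact (n - 1)"
      using bound[OF k] by (metis of_nat_fact of_nat_le_iff)
    ultimately show ?thesis using A by linarith
  qed
  have ks: "int n \<le> 3 * (\<Sum>k=1..n. w k)" by (rule key_sum[OF n5 hw])
  have sw: "(\<Sum>k=1..n. w k) = int n * A - int (card C)"
    by (simp add: w_def sum_subtractf cardC)
  have ce: "real_of_int \<lceil>real n / 3\<rceil> - 1 < real n / 3" using ceiling_correct[of "real n / 3"] by linarith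
  then have "3 * \<lceil>real n / 3\<rceil> < int n + 3" by linarith
  moreover have "int (fact (n - 1)) = int n * A - 1" using A by (simp add: of_nat_fact)
  ultimately show ?thesis using ks sw by linarith
qed

theorem theorem1p1:
  fixes p :: nat
  assumes "prime p" and "p \<ge> 11"
  shows "int (P_code p 3) \<le> int (fact (p - 1)) - \<lceil>real p / 3\<rceil> + 2
       \<and> int (fact (p - 1)) - \<lceil>real p / 3\<rceil> + 2 \<le> int (fact (p - 1)) - 2"
proof
  define S where "S = {C. perm_code_dist p 3 C}"
  have finSn: "finite (Sn p)" unfolding Sn_def by (rule finite_permutations) simp
  have "S \<subseteq> Pow (Sn p)" by (auto simp: S_def perm_code_dist_def)
  then have finS: "finite S" using finSn by (meson finite_Pow_iff finite_subset)
  have "{id} \<in> S" by (auto simp: S_def perm_code_dist_def Sn_def permutes_id)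
  then have ne: "card ` S \<noteq> {}" by blast
  have "P_code p 3 \<in> card ` S" unfolding P_code_def S_def[symmetric]
    by (rule Max_in) (use finS ne in auto)
  then obtain C where C: "perm_code_dist p 3 C" "P_code p 3 = card C" by (auto simp: S_def)
  show "int (P_code p 3) \<le> int (fact (p - 1)) - \<lceil>real p / 3\<rceil> + 2"
    using code_bound[OF assms(1) _ C(1)] assms(2) C(2) by simp
  have "4 \<le> \<lceil>real p / 3\<rceil>" unfolding le_ceiling_iff using assms(2) by simp
  then show "int (fact (p - 1)) - \<lceil>real p / 3\<rceil> + 2 \<le> int (fact (p - 1)) - 2" by simp
qed

end
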